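(* Let $I$ be a finite set of positive integers and $m=\max(I\cup\{0\})$. Then for every integer $n\ge m+2$, $$d(I;n)\ge |d(I;-1)|.$$
   Context: For $n>m$, $d(I;n)$ is the number of permutations $\pi\in\mathfrak S_n$ with $\{i\mid\pi_i>\pi_{i+1}\}=I$; it is a polynomial in $n$, and $d(I;-1)$ is the value of this polynomial at $-1$. *)

theory Defs
  imports "HOL-Combinatorics.Permutations" "HOL-Computational_Algebra.Polynomial"
begin

definition descents :: "nat \<Rightarrow> (nat \<Rightarrow> nat) \<Rightarrow> nat set" where
  "descents n p = {i. 1 \<le> i \<and> i < n \<and> p i > p (Suc i)}"

definition dcount :: "nat set \<Rightarrow> nat \<Rightarrow> nat" where
  "dcount I n = card {p. p permutes {1..n} \<and> descents n p = I}"

definition dpoly :: "nat set \<Rightarrow> real poly" where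
  "dpoly I = (THE q. \<forall>n. n > Max (I \<union> {0}) \<longrightarrow> poly q (real n) = real (dcount I n))"

end

theory Submission imports Defs begin

definition bp :: "nat \<Rightarrow> real poly" where
  "bp m = smult (1 / fact m) (\<Prod>i\<in>{0..<m}. [:- of_nat i, 1:])"

lemma poly_bp: "poly (bp m) x = x gchoose m"
  by (simp add: bp_def poly_prod gbinomial_prod_rev)

lemma poly_bp_nat: "poly (bp m) (real n) = real (n choose m)"
  by (simp add: poly_bp binomial_gbinomial)

lemma poly_bp_m1: "poly (bp m) (-1) = (-1) ^ m"
  by (simp add: poly_bp gbinomial_minus[of 1] binomial_gbinomial[of m m, symmetric])

lemma poly_unique:
  fixes q1 q2 :: "real poly"
  assumes "\<forall>n. n > (M::nat) \<longrightarrow> poly q1 (real n) = f n"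
    and "\<forall>n. n > M \<longrightarrow> poly q2 (real n) = f n"
  shows "q1 = q2"
proof (rule ccontr)
  assume "q1 \<noteq> q2"
  hence "q1 - q2 \<noteq> 0" by simp
  hence fin: "finite {x. poly (q1 - q2) x = 0}" by (rule poly_roots_finite)
  have "real ` {M<..} \<subseteq> {x. poly (q1 - q2) x = 0}" using assms by auto
  moreover have "infinite (real ` {M<..})"
    using finite_imageD[of real "{M<..}"] infinite_Ioi[of M] by (auto simp: inj_on_def)
  ultimately show False using fin finite_subset by blast
qed

definition rk :: "nat set \<Rightarrow> nat \<Rightarrow> nat" where
  "rk A x = card {y\<in>A. y < x}"

lemma rk_less: "finite A \<Longrightarrow> y \<in> A \<Longrightarrow> y < x \<Longrightarrow> rk A y < rk A x"
  unfolding rk_def by (rule psubset_card_mono) auto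

lemma rk_less_iff: "finite A \<Longrightarrow> x \<in> A \<Longrightarrow> y \<in> A \<Longrightarrow> rk A x < rk A y \<longleftrightarrow> x < y"
  by (metis linorder_neqE_nat not_less_iff_gr_or_eq rk_less)

lemma rk_inj: "finite A \<Longrightarrow> inj_on (rk A) A"
  by (metis inj_onI linorder_neqE_nat order_less_irrefl rk_less)

lemma rk_lt: "finite A \<Longrightarrow> x \<in> A \<Longrightarrow> rk A x < card A"
  unfolding rk_def by (rule psubset_card_mono) auto

lemma rk_bij: "finite A \<Longrightarrow> bij_betw (rk A) A {..<card A}"
proof -
  assume f: "finite A"
  have "rk A ` A \<subseteq> {..<card A}" using rk_lt f by auto
  moreover have "card (rk A ` A) = card {..<card A}"
    using card_image[OF rk_inj[OF f]] by simp
  ultimately have "rk A ` A = {..<card A}"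
    by (simp add: card_subset_eq)
  thus ?thesis using rk_inj[OF f] by (simp add: bij_betw_def)
qed

definition en :: "nat set \<Rightarrow> nat \<Rightarrow> nat" where
  "en A = inv_into A (rk A)"

lemma en_bij: "finite A \<Longrightarrow> bij_betw (en A) {..<card A} A"
  unfolding en_def by (rule bij_betw_inv_into[OF rk_bij])

lemma rk_en: "finite A \<Longrightarrow> k < card A \<Longrightarrow> rk A (en A k) = k"
  unfolding en_def using bij_betw_inv_into_right[OF rk_bij] by auto

lemma en_in: "finite A \<Longrightarrow> k < card A \<Longrightarrow> en A k \<in> A"
  using en_bij bij_betwE by blast

lemma en_less_iff: "finite A \<Longrightarrow> k < card A \<Longrightarrow> l < card A \<Longrightarrow> en A k < en A l \<longleftrightarrow> k < l"
  by (metis en_in rk_en rk_less_iff)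

lemma en_rk: "finite A \<Longrightarrow> x \<in> A \<Longrightarrow> en A (rk A x) = x"
  unfolding en_def using rk_inj by (simp add: inv_into_f_f)

lemma rk_incr:
  assumes fin: "finite B" and bij: "bij_betw f {Suc a..b} B"
    and mono: "\<And>i j. i \<in> {Suc a..b} \<Longrightarrow> j \<in> {Suc a..b} \<Longrightarrow> i < j \<Longrightarrow> f i < f j"
    and i: "i \<in> {Suc a..b}"
  shows "rk B (f i) = i - Suc a"
proof -
  have "{y\<in>B. y < f i} = f ` {Suc a..<i}"
  proof
    show "{y\<in>B. y < f i} \<subseteq> f ` {Suc a..<i}"
    proof
      fix y assume y: "y \<in> {y\<in>B. y < f i}"
      then obtain j where j: "j \<in> {Suc a..b}" "y = f j" using bij bij_betw_imp_surj_on by blast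
      have "j < i" using mono[OF i j(1)] y j i by (metis linorder_neqE_nat mem_Collect_eq not_less_iff_gr_or_eq)
      thus "y \<in> f ` {Suc a..<i}" using j by auto
    qed
    show "f ` {Suc a..<i} \<subseteq> {y\<in>B. y < f i}"
      using mono i bij bij_betwE by fastforce
  qed
  moreover have "inj_on f {Suc a..<i}"
    using bij i by (auto simp: bij_betw_def intro: inj_on_subset)
  ultimately show ?thesis unfolding rk_def by (simp add: card_image)
qed

lemma chain_mono:
  assumes "\<And>k. a \<le> k \<Longrightarrow> Suc k \<le> b \<Longrightarrow> (f::nat\<Rightarrow>nat) k < f (Suc k)"
  shows "a \<le> i \<Longrightarrow> i < j \<Longrightarrow> j \<le> b \<Longrightarrow> f i < f j"
proof (induction j)
  case 0 then show ?case by simp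
next
  case (Suc j)
  show ?case
  proof (cases "i = j")
    case True then show ?thesis using assms Suc by simp
  next
    case False
    then have "f i < f j" using Suc by simp
    also have "f j < f (Suc j)" using assms Suc by simp
    finally show ?thesis .
  qed
qed

lemma bij_shift: "bij_betw (\<lambda>i. i - Suc a) {Suc a..b} {..<b - a}"
proof (rule bij_betw_imageI)
  show "inj_on (\<lambda>i. i - Suc a) {Suc a..b}" by (auto simp: inj_on_def)
  show "(\<lambda>i. i - Suc a) ` {Suc a..b} = {..<b - a}"
  proof
    show "(\<lambda>i. i - Suc a) ` {Suc a..b} \<subseteq> {..<b - a}" by auto
    show "{..<b - a} \<subseteq> (\<lambda>i. i - Suc a) ` {Suc a..b}"
    proof
      fix x assume "x \<in> {..<b - a}"
      hence "x + Suc a \<in> {Suc a..b}" "x = (x + Suc a) - Suc a" by auto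
      thus "x \<in> (\<lambda>i. i - Suc a) ` {Suc a..b}" by blast
    qed
  qed
qed

definition Sset :: "nat \<Rightarrow> nat \<Rightarrow> nat set \<Rightarrow> (nat \<Rightarrow> nat) set" where
  "Sset n m J = {p. p permutes {1..n} \<and> descents n p \<inter> {..<m} = J \<and>
     (\<forall>i. m < i \<and> i < n \<longrightarrow> p i < p (Suc i))}"

definition Phi :: "nat \<Rightarrow> (nat \<Rightarrow> nat) \<Rightarrow> nat set \<times> (nat \<Rightarrow> nat)" where
  "Phi m p = (p ` {1..m}, \<lambda>i. if i \<in> {1..m} then Suc (rk (p ` {1..m}) (p i)) else i)"

context
  fixes n m :: nat and J :: "nat set"
  assumes J: "J \<subseteq> {1..<m}" and mn: "m \<le> n"
begin

lemma tail_bij: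
  assumes p: "p permutes {1..n}"
  shows "bij_betw p {Suc m..n} ({1..n} - p ` {1..m})"
proof -
  have "p ` {Suc m..n} = p ` ({1..n} - {1..m})" using mn by (intro arg_cong[where f="(`) p"]) auto
  also have "\<dots> = p ` {1..n} - p ` {1..m}"
    by (rule inj_on_image_set_diff[OF permutes_inj_on[OF p]]) (use mn in auto)
  also have "\<dots> = {1..n} - p ` {1..m}" using permutes_image[OF p] by simp
  finally show ?thesis using permutes_inj_on[OF p]
    by (auto simp: bij_betw_def intro: inj_on_subset)
qed

lemma tail_rk:
  assumes "p \<in> Sset n m J" and x: "x \<in> {Suc m..n}"
  shows "rk ({1..n} - p ` {1..m}) (p x) = x - Suc m"
proof -
  have p: "p permutes {1..n}" and tl: "\<And>i. m < i \<Longrightarrow> i < n \<Longrightarrow> p i < p (Suc i)"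
    using assms(1) by (auto simp: Sset_def)
  show ?thesis
  proof (rule rk_incr[OF _ tail_bij[OF p] _ x])
    show "finite ({1..n} - p ` {1..m})" by simp
    fix i j assume "i \<in> {Suc m..n}" "j \<in> {Suc m..n}" "i < j"
    thus "p i < p j" using chain_mono[of "Suc m" n p i j] tl by auto
  qed
qed

lemma first_bij:
  assumes p: "p permutes {1..n}"
  shows "bij_betw p {1..m} (p ` {1..m})"
  using permutes_inj_on[OF p] by (auto simp: bij_betw_def intro: inj_on_subset)

lemma Phi_in:
  assumes pS: "p \<in> Sset n m J"
  shows "Phi m p \<in> {A. A \<subseteq> {1..n} \<and> card A = m} \<times> {s. s permutes {1..m} \<and> descents m s = J}"
proof -
  have p: "p permutes {1..n}" and dJ: "descents n p \<inter> {..<m} = J"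
    using pS by (auto simp: Sset_def)
  define A where "A = p ` {1..m}"
  define s where "s = (\<lambda>i. if i \<in> {1..m} then Suc (rk A (p i)) else i)"
  have A1: "A \<subseteq> {1..n}" unfolding A_def using permutes_image[OF p] mn by auto
  have bA: "bij_betw p {1..m} A" unfolding A_def by (rule first_bij[OF p])
  have cA: "card A = m" using bij_betw_same_card[OF bA] by simp
  have finA: "finite A" using A1 finite_subset by blast
  have "bij_betw (Suc \<circ> rk A \<circ> p) {1..m} {1..m}"
  proof -
    have "bij_betw (rk A \<circ> p) {1..m} {..<m}"
      using bij_betw_trans[OF bA rk_bij[OF finA]] cA by simp
    moreover have "bij_betw Suc {..<m} {1..m}"
      by (simp add: bij_betw_def image_Suc_lessThan)
    ultimately show ?thesis using bij_betw_trans by (metis comp_assoc)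
  qed
  hence "bij_betw s {1..m} {1..m}" by (rule bij_betw_cong[THEN iffD1, rotated]) (auto simp: s_def)
  hence sp: "s permutes {1..m}" by (rule bij_imp_permutes) (auto simp: s_def)
  have "descents m s = descents n p \<inter> {..<m}"
  proof -
    { fix i assume i: "1 \<le> i" "i < m"
      hence "p i \<in> A" "p (Suc i) \<in> A" unfolding A_def by auto
      hence "s i > s (Suc i) \<longleftrightarrow> p i > p (Suc i)" using i rk_less_iff[OF finA] by (auto simp: s_def) }
    thus ?thesis using mn by (auto simp: descents_def)
  qed
  moreover have "Phi m p = (A, s)" by (simp only: Phi_def A_def s_def)
  ultimately show ?thesis using sp A1 cA dJ by simp
qed

lemma Phi_inj: "inj_on (Phi m) (Sset n m J)"
proof (rule inj_onI)
  fix p1 p2 assume p1S: "p1 \<in> Sset n m J" and p2S: "p2 \<in> Sset n m J" and eq: "Phi m p1 = Phi m p2"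
  have p1: "p1 permutes {1..n}" and p2: "p2 permutes {1..n}" using p1S p2S by (auto simp: Sset_def)
  define A where "A = p1 ` {1..m}"
  have A2: "A = p2 ` {1..m}" using eq by (simp add: Phi_def A_def)
  have finA: "finite A" unfolding A_def by simp
  show "p1 = p2"
  proof
    fix x
    consider "x \<in> {1..m}" | "x \<in> {Suc m..n}" | "x \<notin> {1..n}" using mn by force
    then show "p1 x = p2 x"
    proof cases
      case 1
      have "Suc (rk A (p1 x)) = Suc (rk A (p2 x))"
        using fun_cong[OF arg_cong[where f=snd, OF eq], of x] 1 A2 by (simp add: Phi_def A_def)
      moreover have "p1 x \<in> A" "p2 x \<in> A" using 1 A2 by (auto simp: A_def)
      ultimately show ?thesis using rk_inj[OF finA] by (auto dest: inj_onD)
    next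
      case 2
      have "rk ({1..n} - A) (p1 x) = rk ({1..n} - A) (p2 x)"
        using tail_rk[OF p1S 2] tail_rk[OF p2S 2] A2 by (simp add: A_def)
      moreover have "p1 x \<in> {1..n} - A" "p2 x \<in> {1..n} - A"
        using bij_betwE[OF tail_bij[OF p1]] bij_betwE[OF tail_bij[OF p2]] 2 A2 by (auto simp: A_def)
      ultimately show ?thesis using rk_inj[of "{1..n} - A"] by (auto dest: inj_onD)
    next
      case 3 thus ?thesis using permutes_not_in[OF p1] permutes_not_in[OF p2] by simp
    qed
  qed
qed

end

context
  fixes n m :: nat and J :: "nat set"
  assumes J: "J \<subseteq> {1..<m}" and mn: "m \<le> n"
begin

lemma Phi_surj:
  assumes A1: "A \<subseteq> {1..n}" and cA: "card A = m" and sp: "s permutes {1..m}" and sd: "descents m s = J"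
  shows "(A, s) \<in> Phi m ` Sset n m J"
proof -
  define B where "B = {1..n} - A"
  have finA: "finite A" using A1 finite_subset by blast
  have finB: "finite B" unfolding B_def by simp
  have cB: "card B = n - m" unfolding B_def using A1 cA by (simp add: card_Diff_subset finA)
  define p where "p = (\<lambda>i. if i \<in> {1..m} then en A (s i - 1) else if i \<in> {Suc m..n} then en B (i - Suc m) else i)"
  have s_in: "\<And>i. i \<in> {1..m} \<Longrightarrow> s i \<in> {1..m}" using permutes_in_image[OF sp] by blast
  have b1: "bij_betw p {1..m} A"
  proof -
    have "bij_betw (en A \<circ> (\<lambda>i. i - 1) \<circ> s) {1..m} A"
    proof -
      have sh: "bij_betw (\<lambda>i. i - 1) {1..m} {..<m}" using bij_shift[of 0 m] by simp
      have "bij_betw ((\<lambda>i. i - 1) \<circ> s) {1..m} {..<m}"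
        using bij_betw_trans[OF permutes_imp_bij[OF sp] sh] by simp
      moreover have "bij_betw (en A) {..<m} A" using en_bij[OF finA] cA by simp
      ultimately show ?thesis using bij_betw_trans by (metis comp_assoc)
    qed
    thus ?thesis by (rule bij_betw_cong[THEN iffD1, rotated]) (auto simp: p_def)
  qed
  have b2: "bij_betw p {Suc m..n} B"
  proof -
    have "bij_betw (en B \<circ> (\<lambda>i. i - Suc m)) {Suc m..n} B"
      using bij_betw_trans[OF bij_shift[of m n], of "en B" B] en_bij[OF finB] cB by simp
    thus ?thesis by (rule bij_betw_cong[THEN iffD1, rotated]) (auto simp: p_def)
  qed
  have "bij_betw p ({1..m} \<union> {Suc m..n}) (A \<union> B)"
    by (rule bij_betw_combine[OF b1 b2]) (auto simp: B_def)
  moreover have "{1..m} \<union> {Suc m..n} = {1..n}" using mn by auto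
  moreover have "A \<union> B = {1..n}" using A1 by (auto simp: B_def)
  ultimately have "bij_betw p {1..n} {1..n}" by simp
  hence pp: "p permutes {1..n}" by (rule bij_imp_permutes) (use mn in \<open>auto simp: p_def\<close>)
  have dd: "descents n p \<inter> {..<m} = J"
  proof -
    { fix i assume i: "1 \<le> i" "i < m"
      hence si: "s i \<in> {1..m}" "s (Suc i) \<in> {1..m}" using s_in by auto
      hence lt: "s i - 1 < card A" "s (Suc i) - 1 < card A" using cA by auto
      have "p i > p (Suc i) \<longleftrightarrow> s i - 1 > s (Suc i) - 1"
        using i en_less_iff[OF finA lt(2) lt(1)] by (simp add: p_def)
      also have "\<dots> \<longleftrightarrow> s i > s (Suc i)" using si by auto
      finally have "p i > p (Suc i) \<longleftrightarrow> s i > s (Suc i)" . }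
    thus ?thesis using mn sd by (auto simp: descents_def)
  qed
  have tl: "\<forall>i. m < i \<and> i < n \<longrightarrow> p i < p (Suc i)"
  proof (intro allI impI)
    fix i assume i: "m < i \<and> i < n"
    thus "p i < p (Suc i)" using en_less_iff[OF finB, of "i - Suc m" "Suc i - Suc m"] cB
      by (auto simp: p_def)
  qed
  have pS: "p \<in> Sset n m J" using pp dd tl by (simp add: Sset_def)
  have imA: "p ` {1..m} = A" using b1 by (simp add: bij_betw_def)
  have "(\<lambda>i. if i \<in> {1..m} then Suc (rk A (p i)) else i) = s"
  proof
    fix i show "(if i \<in> {1..m} then Suc (rk A (p i)) else i) = s i"
    proof (cases "i \<in> {1..m}")
      case True
      have "rk A (p i) = s i - 1" using rk_en[OF finA, of "s i - 1"] s_in[OF True] cA True by (auto simp: p_def)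
      thus ?thesis using True s_in[OF True] by auto
    next
      case False
      have "s i = i" using permutes_not_in[OF sp False] .
      thus ?thesis using False by auto
    qed
  qed
  hence "Phi m p = (A, s)" unfolding Phi_def imA by simp
  thus ?thesis using pS by (metis image_eqI)
qed

lemma card_Sset: "card (Sset n m J) = (n choose m) * dcount J m"
proof -
  let ?P = "{A. A \<subseteq> {1..n} \<and> card A = m} \<times> {s. s permutes {1..m} \<and> descents m s = J}"
  have "bij_betw (Phi m) (Sset n m J) ?P"
  proof (rule bij_betw_imageI)
    show "inj_on (Phi m) (Sset n m J)" using Phi_inj[OF J mn] .
    show "Phi m ` Sset n m J = ?P"
      using Phi_in[OF J mn] Phi_surj by fastforce
  qed
  hence "card (Sset n m J) = card ?P" by (rule bij_betw_same_card)
  also have "\<dots> = (n choose m) * dcount J m"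
    by (simp add: card_cartesian_product n_subsets dcount_def)
  finally show ?thesis .
qed

end

lemma descents_sub: "descents n p \<subseteq> {1..<n}"
  by (auto simp: descents_def)

lemma Sset_split:
  assumes J: "J \<subseteq> {1..<m}" and mn: "m \<le> n"
  shows "Sset n m J = {p. p permutes {1..n} \<and> descents n p = insert m J} \<union> {p. p permutes {1..n} \<and> descents n p = J}"
proof -
  { fix p assume p: "p permutes {1..n}"
    have "(descents n p \<inter> {..<m} = J \<and> (\<forall>i. m < i \<and> i < n \<longrightarrow> p i < p (Suc i)))
       \<longleftrightarrow> (descents n p = insert m J \<or> descents n p = J)"
    proof
      assume a: "descents n p \<inter> {..<m} = J \<and> (\<forall>i. m < i \<and> i < n \<longrightarrow> p i < p (Suc i))"
      have "descents n p \<inter> {m<..} = {}" using a by (auto simp: descents_def)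
      hence "descents n p = J \<union> (descents n p \<inter> {m})" using a by auto
      thus "descents n p = insert m J \<or> descents n p = J" by auto
    next
      assume b: "descents n p = insert m J \<or> descents n p = J"
      have "descents n p \<inter> {..<m} = J" using b J by auto
      moreover have "p i < p (Suc i)" if "m < i" "i < n" for i
      proof -
        have "i \<notin> descents n p" using b J that by auto
        hence "\<not> p i > p (Suc i)" using that by (auto simp: descents_def)
        moreover have "p i \<noteq> p (Suc i)" using permutes_inj[OF p] by (auto dest: injD)
        ultimately show ?thesis by simp
      qed
      ultimately show "descents n p \<inter> {..<m} = J \<and> (\<forall>i. m < i \<and> i < n \<longrightarrow> p i < p (Suc i))" by blast
    qed }
  thus ?thesis unfolding Sset_def by blast
qed

lemma dcount_rec:
  assumes J: "J \<subseteq> {1..<m}" and mn: "m \<le> n"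
  shows "dcount (insert m J) n + dcount J n = (n choose m) * dcount J m"
proof -
  have fin: "finite {p. p permutes {1..n}}" by (rule finite_permutations) simp
  have "card (Sset n m J) = dcount (insert m J) n + dcount J n"
    unfolding Sset_split[OF J mn] dcount_def
    by (rule card_Un_disjoint) (use J in \<open>auto intro: finite_subset[OF _ fin]\<close>)
  thus ?thesis using card_Sset[OF J mn] by simp
qed

lemma descents_Suc:
  assumes p: "p permutes {1..n}"
  shows "descents (Suc n) p = descents n p"
proof -
  have "p (Suc n) = Suc n" using permutes_not_in[OF p] by simp
  moreover have "n \<ge> 1 \<Longrightarrow> p n \<le> n" using permutes_in_image[OF p, of n] by auto
  ultimately show ?thesis by (auto simp: descents_def less_Suc_eq)
qed

lemma dcount_mono1: "dcount I n \<le> dcount I (Suc n)"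
proof -
  have fin: "finite {p. p permutes {1..Suc n}}" by (rule finite_permutations) simp
  have "{p. p permutes {1..n} \<and> descents n p = I} \<subseteq> {p. p permutes {1..Suc n} \<and> descents (Suc n) p = I}"
    using descents_Suc permutes_subset[of _ "{1..n}" "{1..Suc n}"] by auto
  hence "card {p. p permutes {1..n} \<and> descents n p = I} \<le> card {p. p permutes {1..Suc n} \<and> descents (Suc n) p = I}"
    by (intro card_mono) (auto intro: finite_subset[OF _ fin])
  thus ?thesis unfolding dcount_def .
qed

lemma dcount_mono: "n \<le> n' \<Longrightarrow> dcount I n \<le> dcount I n'"
  by (induction n' rule: dec_induct) (auto intro: order_trans[OF _ dcount_mono1])

definition fa :: "nat \<Rightarrow> (nat \<Rightarrow> nat) \<Rightarrow> nat \<Rightarrow> nat" where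
  "fa m s = (\<lambda>i. if i \<in> {1..m} then s i + 2 else if i = Suc m then 1 else if i = Suc (Suc m) then 2 else i)"

definition fb :: "nat \<Rightarrow> (nat \<Rightarrow> nat) \<Rightarrow> nat \<Rightarrow> nat" where
  "fb m t = (\<lambda>i. if i \<in> {1..m} then t i + 1 else if i = Suc m then 1 else if i = Suc (Suc m) then t (Suc m) + 1 else i)"

lemma endo_permutes:
  assumes "finite S" "f ` S \<subseteq> S" "inj_on f S" "\<And>x. x \<notin> S \<Longrightarrow> f x = x"
  shows "f permutes S"
proof (rule bij_imp_permutes)
  have "f ` S = S" by (rule endo_inj_surj) (use assms in auto)
  thus "bij_betw f S S" using assms(3) by (simp add: bij_betw_def)
qed (use assms in auto)

lemma three_cases:
  assumes "x \<in> {1..Suc (Suc m)}"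
  obtains "x \<in> {1..m}" | "x = Suc m" | "x = Suc (Suc m)"
  using assms by force

lemma fa_perm:
  assumes sp: "s permutes {1..m}"
  shows "fa m s permutes {1..Suc (Suc m)}"
proof (rule endo_permutes)
  have si: "\<And>i. i \<in> {1..m} \<Longrightarrow> s i \<in> {1..m}" using permutes_in_image[OF sp] by blast
  have sinj: "\<And>a b. s a = s b \<Longrightarrow> a = b" using permutes_inj[OF sp] by (auto dest: injD)
  have v1: "fa m s x = s x + 2" if "x \<in> {1..m}" for x using that by (simp add: fa_def)
  have v2: "fa m s (Suc m) = 1" by (simp add: fa_def)
  have v3: "fa m s (Suc (Suc m)) = 2" by (simp add: fa_def)
  show "fa m s ` {1..Suc (Suc m)} \<subseteq> {1..Suc (Suc m)}"
  proof
    fix y assume "y \<in> fa m s ` {1..Suc (Suc m)}"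
    then obtain x where x: "x \<in> {1..Suc (Suc m)}" and y: "y = fa m s x" by blast
    from x show "y \<in> {1..Suc (Suc m)}"
    proof (cases rule: three_cases)
      case 1 thus ?thesis using v1[OF 1] si[OF 1] y by auto
    qed (use y v2 v3 in auto)
  qed
  show "inj_on (fa m s) {1..Suc (Suc m)}"
  proof (rule inj_onI)
    fix x y assume x: "x \<in> {1..Suc (Suc m)}" and y: "y \<in> {1..Suc (Suc m)}" and e: "fa m s x = fa m s y"
    from x show "x = y"
    proof (cases rule: three_cases)
      case x1: 1
      from y show ?thesis
      proof (cases rule: three_cases)
        case 1 thus ?thesis using e v1 x1 sinj by simp
      qed (use e v1[OF x1] v2 v3 si[OF x1] in auto)
    next
      case x2: 2
      from y show ?thesis
      proof (cases rule: three_cases)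
        case 1 thus ?thesis using e v1[OF 1] x2 v2 by simp
      qed (use e x2 v2 v3 in auto)
    next
      case x3: 3
      from y show ?thesis
      proof (cases rule: three_cases)
        case 1 thus ?thesis using e v1[OF 1] x3 v3 si[OF 1] by simp
      qed (use e x3 v2 v3 in auto)
    qed
  qed
qed (auto simp: fa_def)

lemma fb_perm:
  assumes tp: "t permutes {1..Suc m}"
  shows "fb m t permutes {1..Suc (Suc m)}"
proof (rule endo_permutes)
  have ti: "\<And>i. i \<in> {1..Suc m} \<Longrightarrow> t i \<in> {1..Suc m}" using permutes_in_image[OF tp] by blast
  have tinj: "\<And>a b. t a = t b \<Longrightarrow> a = b" using permutes_inj[OF tp] by (auto dest: injD)
  have v1: "fb m t x = t x + 1" if "x \<in> {1..m}" for x using that by (simp add: fb_def)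
  have v2: "fb m t (Suc m) = 1" by (simp add: fb_def)
  have v3: "fb m t (Suc (Suc m)) = t (Suc m) + 1" by (simp add: fb_def)
  have w1: "t x \<in> {1..Suc m}" if "x \<in> {1..m}" for x using ti that by auto
  have w3: "t (Suc m) \<in> {1..Suc m}" using ti by auto
  show "fb m t ` {1..Suc (Suc m)} \<subseteq> {1..Suc (Suc m)}"
  proof
    fix y assume "y \<in> fb m t ` {1..Suc (Suc m)}"
    then obtain x where x: "x \<in> {1..Suc (Suc m)}" and y: "y = fb m t x" by blast
    from x show "y \<in> {1..Suc (Suc m)}"
    proof (cases rule: three_cases)
      case 1 thus ?thesis using v1[OF 1] w1[OF 1] y by auto
    qed (use y v2 v3 w3 in auto)
  qed
  show "inj_on (fb m t) {1..Suc (Suc m)}"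
  proof (rule inj_onI)
    fix x y assume x: "x \<in> {1..Suc (Suc m)}" and y: "y \<in> {1..Suc (Suc m)}" and e: "fb m t x = fb m t y"
    from x show "x = y"
    proof (cases rule: three_cases)
      case x1: 1
      from y show ?thesis
      proof (cases rule: three_cases)
        case 1 thus ?thesis using e v1 x1 tinj by simp
      next
        case 2 thus ?thesis using e v1[OF x1] v2 w1[OF x1] by simp
      next
        case 3 thus ?thesis using e v1[OF x1] v3 tinj[of x "Suc m"] x1 by simp
      qed
    next
      case x2: 2
      from y show ?thesis
      proof (cases rule: three_cases)
        case 1 thus ?thesis using e v1[OF 1] x2 v2 w1[OF 1] by simp
      next
        case 3 thus ?thesis using e x2 v2 v3 w3 by simp
      qed (use x2 in simp)
    next
      case x3: 3
      from y show ?thesis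
      proof (cases rule: three_cases)
        case 1 thus ?thesis using e v1[OF 1] x3 v3 tinj[of y "Suc m"] by simp
      next
        case 2 thus ?thesis using e x3 v2 v3 w3 by simp
      qed (use x3 in simp)
    qed
  qed
qed (auto simp: fb_def)

lemma fa_desc:
  assumes sp: "s permutes {1..m}" and sd: "descents m s = J" and m: "0 < m"
  shows "descents (Suc (Suc m)) (fa m s) = insert m J"
proof -
  have "i \<in> descents (Suc (Suc m)) (fa m s) \<longleftrightarrow> i \<in> insert m J" for i
  proof -
    consider "i = 0" | "1 \<le> i \<and> i < m" | "i = m" | "i = Suc m" | "i > Suc m" by linarith
    thus ?thesis
    proof cases
      case 2 thus ?thesis using sd by (auto simp: descents_def fa_def)
    next
      case 3 thus ?thesis using m sd by (auto simp: descents_def fa_def)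
    qed (use sd m in \<open>auto simp: descents_def fa_def\<close>)
  qed
  thus ?thesis by blast
qed

lemma fb_desc:
  assumes tp: "t permutes {1..Suc m}" and td: "descents (Suc m) t = J" and m: "0 < m" and J: "J \<subseteq> {1..<m}"
  shows "descents (Suc (Suc m)) (fb m t) = insert m J"
proof -
  have "i \<in> descents (Suc (Suc m)) (fb m t) \<longleftrightarrow> i \<in> insert m J" for i
  proof -
    consider "i = 0" | "1 \<le> i \<and> i < m" | "i = m" | "i = Suc m" | "i > Suc m" by linarith
    thus ?thesis
    proof cases
      case 2 thus ?thesis using td by (auto simp: descents_def fb_def)
    next
      case 3
      have "t m \<in> {1..Suc m}" using permutes_in_image[OF tp] m by auto
      thus ?thesis using 3 m td by (auto simp: descents_def fb_def)
    qed (use td J m in \<open>auto simp: descents_def fb_def\<close>)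
  qed
  thus ?thesis by blast
qed

lemma fb_last:
  assumes tp: "t permutes {1..Suc m}" and td: "descents (Suc m) t = J" and m: "0 < m" and J: "J \<subseteq> {1..<m}"
  shows "t (Suc m) \<noteq> 1"
proof
  assume a: "t (Suc m) = 1"
  have "t m \<in> {1..Suc m}" using permutes_in_image[OF tp] m by auto
  moreover have "t m \<noteq> t (Suc m)" using permutes_inj[OF tp] by (auto dest: injD)
  ultimately have "m \<in> descents (Suc m) t" using a m by (auto simp: descents_def)
  thus False using td J by auto
qed

lemma dcount_lower:
  assumes J: "J \<subseteq> {1..<m}" and m: "0 < m"
  shows "dcount J m + dcount J (Suc m) \<le> dcount (insert m J) (Suc (Suc m))"
proof -
  let ?Da = "{s. s permutes {1..m} \<and> descents m s = J}"
  let ?Db = "{t. t permutes {1..Suc m} \<and> descents (Suc m) t = J}"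
  let ?T = "{p. p permutes {1..Suc (Suc m)} \<and> descents (Suc (Suc m)) p = insert m J}"
  have finT: "finite ?T" by (rule finite_subset[OF _ finite_permutations[of "{1..Suc (Suc m)}"]]) auto
  have finDa: "finite ?Da" by (rule finite_subset[OF _ finite_permutations[of "{1..m}"]]) auto
  have finDb: "finite ?Db" by (rule finite_subset[OF _ finite_permutations[of "{1..Suc m}"]]) auto
  have injA: "inj_on (fa m) ?Da"
  proof (rule inj_onI)
    fix s1 s2 assume s1: "s1 \<in> ?Da" and s2: "s2 \<in> ?Da" and e: "fa m s1 = fa m s2"
    show "s1 = s2"
    proof
      fix x show "s1 x = s2 x"
      proof (cases "x \<in> {1..m}")
        case True thus ?thesis using fun_cong[OF e, of x] by (simp add: fa_def)
      next
        case False
        have "s1 x = x" using permutes_not_in[of s1 "{1..m}" x] s1 False by blast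
        moreover have "s2 x = x" using permutes_not_in[of s2 "{1..m}" x] s2 False by blast
        ultimately show ?thesis by simp
      qed
    qed
  qed
  have injB: "inj_on (fb m) ?Db"
  proof (rule inj_onI)
    fix s1 s2 assume s1: "s1 \<in> ?Db" and s2: "s2 \<in> ?Db" and e: "fb m s1 = fb m s2"
    show "s1 = s2"
    proof
      fix x show "s1 x = s2 x"
      proof (cases "x \<in> {1..m}")
        case True thus ?thesis using fun_cong[OF e, of x] by (simp add: fb_def)
      next
        case False
        show ?thesis
        proof (cases "x = Suc m")
          case True thus ?thesis using fun_cong[OF e, of "Suc (Suc m)"] by (simp add: fb_def)
        next
          case False2: False
          hence "x \<notin> {1..Suc m}" using False by auto
          moreover have "s1 x = x" using permutes_not_in[of s1 "{1..Suc m}" x] s1 calculation by blast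
          moreover have "s2 x = x" using permutes_not_in[of s2 "{1..Suc m}" x] s2 calculation by blast
          ultimately show ?thesis by simp
        qed
      qed
    qed
  qed
  have subA: "fa m ` ?Da \<subseteq> ?T" using fa_perm fa_desc m by blast
  have subB: "fb m ` ?Db \<subseteq> ?T" using fb_perm fb_desc m J by blast
  have disj: "fa m ` ?Da \<inter> fb m ` ?Db = {}"
  proof -
    { fix s t assume "s \<in> ?Da" "t \<in> ?Db" "fa m s = fb m t"
      hence "fa m s (Suc (Suc m)) = fb m t (Suc (Suc m))" by simp
      hence "t (Suc m) = 1" by (simp add: fa_def fb_def)
      hence False using fb_last[of t m J] \<open>t \<in> ?Db\<close> m J by auto }
    thus ?thesis by blast
  qed
  have "dcount J m + dcount J (Suc m) = card (fa m ` ?Da) + card (fb m ` ?Db)"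
    unfolding dcount_def using card_image[OF injA] card_image[OF injB] by simp
  also have "\<dots> = card (fa m ` ?Da \<union> fb m ` ?Db)"
    by (rule card_Un_disjoint[symmetric]) (use finDa finDb disj in auto)
  also have "\<dots> \<le> card ?T" by (rule card_mono[OF finT]) (use subA subB in auto)
  finally show ?thesis unfolding dcount_def .
qed

lemma dcount_empty: "dcount {} n = 1"
proof -
  have "Sset n 0 {} = {p. p permutes {1..n} \<and> descents n p = {0}} \<union> {p. p permutes {1..n} \<and> descents n p = {}}"
    using Sset_split[of "{}" 0 n] by simp
  also have "\<dots> = {p. p permutes {1..n} \<and> descents n p = {}}"
    by (auto simp: descents_def)
  finally have e: "Sset n 0 {} = {p. p permutes {1..n} \<and> descents n p = {}}" .
  have "dcount {} 0 = 1"
  proof -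
    have "{p. p permutes {1..0::nat} \<and> descents 0 p = {}} = {id}"
      by (auto simp: descents_def)
    thus ?thesis by (simp add: dcount_def)
  qed
  thus ?thesis using card_Sset[of "{}" 0 n] e by (simp add: dcount_def)
qed

lemma main_ind:
  "finite I \<Longrightarrow> (\<forall>i\<in>I. 0 < i) \<Longrightarrow> \<exists>q. (\<forall>n. n > Max (I \<union> {0}) \<longrightarrow> poly q (real n) = real (dcount I n))
      \<and> \<bar>poly q (-1)\<bar> \<le> real (dcount I (Max (I \<union> {0}) + 2))"
proof (induction "card I" arbitrary: I rule: less_induct)
  case less
  show ?case
  proof (cases "I = {}")
    case True
    show ?thesis by (rule exI[of _ 1]) (simp add: True dcount_empty)
  next
    case False
    define m where "m = Max I"
    define J where "J = I - {m}"
    have mI: "m \<in> I" using False less.prems by (simp add: m_def)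
    have m0: "Max (I \<union> {0}) = m" using False less.prems by (simp add: m_def max_def)
    have mpos: "0 < m" using mI less.prems by auto
    have Jsub: "J \<subseteq> {1..<m}"
    proof
      fix x assume "x \<in> J"
      hence "x \<in> I" "x \<noteq> m" by (auto simp: J_def)
      moreover have "x \<le> m" using \<open>x \<in> I\<close> less.prems by (simp add: m_def)
      ultimately show "x \<in> {1..<m}" using less.prems by force
    qed
    have IJ: "I = insert m J" using mI by (auto simp: J_def)
    have cJ: "card J < card I" using card_Diff1_less[OF less.prems(1) mI] by (simp add: J_def)
    obtain q' where q'1: "\<forall>n. n > Max (J \<union> {0}) \<longrightarrow> poly q' (real n) = real (dcount J n)"
      and q'2: "\<bar>poly q' (-1)\<bar> \<le> real (dcount J (Max (J \<union> {0}) + 2))"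
      using less.hyps[OF cJ] less.prems by (auto simp: J_def)
    have mJ: "Max (J \<union> {0}) < m"
    proof -
      have "finite (J \<union> {0})" using less.prems by (simp add: J_def)
      moreover have "\<forall>x\<in>J \<union> {0}. x < m" using Jsub mpos by auto
      ultimately show ?thesis by simp
    qed
    define D where "D = dcount J m"
    define q where "q = smult (real D) (bp m) - q'"
    have p1: "poly q (real n) = real (dcount I n)" if "n > m" for n
    proof -
      have "dcount I n + dcount J n = (n choose m) * D"
        using dcount_rec[OF Jsub, of n] that IJ by (simp add: D_def)
      hence "real (dcount I n + dcount J n) = real ((n choose m) * D)" by (simp only:)
      hence "real (dcount I n) = real D * real (n choose m) - real (dcount J n)"
        by (simp add: algebra_simps)
      moreover have "poly q' (real n) = real (dcount J n)" using q'1 mJ that by simp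
      ultimately show ?thesis by (simp add: q_def poly_bp_nat)
    qed
    have "\<bar>poly q (-1)\<bar> = \<bar>real D * (-1) ^ m - poly q' (-1)\<bar>"
      by (simp add: q_def poly_bp_m1)
    also have "\<dots> \<le> real D + \<bar>poly q' (-1)\<bar>"
      using abs_triangle_ineq4[of "real D * (-1) ^ m" "poly q' (-1)"] by (simp add: abs_mult power_abs)
    also have "\<dots> \<le> real D + real (dcount J (Suc m))"
    proof -
      have "dcount J (Max (J \<union> {0}) + 2) \<le> dcount J (Suc m)"
        by (rule dcount_mono) (use mJ in simp)
      thus ?thesis using q'2 by simp
    qed
    also have "\<dots> \<le> real (dcount I (Suc (Suc m)))"
      using dcount_lower[OF Jsub mpos] IJ by (simp add: D_def)
    finally show ?thesis using p1 m0 by (intro exI[of _ q]) simp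
  qed
qed

theorem proposition3p9:
  fixes I :: "nat set" and n :: nat
  assumes "finite I" and "\<forall>i\<in>I. 0 < i"
    and "n \<ge> Max (I \<union> {0}) + 2"
  shows "real (dcount I n) \<ge> \<bar>poly (dpoly I) (-1)\<bar>"
proof -
  obtain q where q1: "\<forall>n. n > Max (I \<union> {0}) \<longrightarrow> poly q (real n) = real (dcount I n)"
    and q2: "\<bar>poly q (-1)\<bar> \<le> real (dcount I (Max (I \<union> {0}) + 2))"
    using main_ind[OF assms(1,2)] by blast
  have "dpoly I = q"
    unfolding dpoly_def
  proof (rule the_equality)
    show "\<forall>n. n > Max (I \<union> {0}) \<longrightarrow> poly q (real n) = real (dcount I n)" by (rule q1)
    fix q2 assume "\<forall>n. n > Max (I \<union> {0}) \<longrightarrow> poly q2 (real n) = real (dcount I n)"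
    thus "q2 = q" using poly_unique[of "Max (I \<union> {0})" q2 "\<lambda>n. real (dcount I n)" q] q1 by blast
  qed
  moreover have "dcount I (Max (I \<union> {0}) + 2) \<le> dcount I n" by (rule dcount_mono) (use assms(3) in simp)
  ultimately show ?thesis using q2 by simp
qed

end
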